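(* For every complex $s$ with $\Re(s)>3$, \[\sum_{k=1}^\infty k\,\zeta(s,2k)=\tfrac{1}{8}\Big\{(1+2^{1-s})\zeta(s-1)+\zeta(s-2)-2^{1-s}\Big(\zeta\big(s-1,\tfrac12\big)+\tfrac12 \zeta\big(s,\tfrac12\big)\Big)\Big\}.\]
   Context: $\zeta(s,\alpha)=\sum_{n=0}^\infty (n+\alpha)^{-s}$ denotes the Hurwitz zeta function ($\Re(s)>1$, $\alpha>0$), and $\zeta(s)=\zeta(s,1)$ is the Riemann zeta function. *)

theory Defs
  imports "HOL-Analysis.Analysis"
begin

text \<open>Hurwitz zeta function, defined by its Dirichlet series
  (meaningful for Re s > 1 and a > 0):
  hurwitz_zeta s a = sum over n \<ge> 0 of (n + a) powr (-s).\<close>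
definition hurwitz_zeta :: "complex \<Rightarrow> real \<Rightarrow> complex" where
  "hurwitz_zeta s a = (\<Sum>n. (complex_of_real (real n + a)) powr (- s))"

definition riemann_zeta :: "complex \<Rightarrow> complex" where
  "riemann_zeta s = hurwitz_zeta s 1"

end

theory Submission
  imports Defs
begin

definition q :: "complex \<Rightarrow> nat \<Rightarrow> complex" where
  "q z m = (of_nat m) powr (-z)"

lemma q0 [simp]: "q z 0 = 0" by (simp add: q_def)

lemma q_minus1: "q (z - 1) m = of_nat m * q z m"
proof (cases "m = 0")
  case False
  have "-(z - 1) = 1 + (-z)" by simp
  then show ?thesis using False unfolding q_def by (simp only: powr_add) simp
qed simp

lemma q_double: "q z (2*m) = 2 powr (-z) * q z m"
proof -
  have "(of_nat (2*m) :: complex) = 2 * of_nat m" by simp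
  then show ?thesis unfolding q_def
    by (simp only: powr_times_real) (auto intro: powr_times_real)
qed

lemma norm_q: "norm (q z m) = real m powr (- Re z)"
  unfolding q_def by (subst norm_powr_real_powr) auto

lemma summable_norm_q: "Re z > 1 \<Longrightarrow> summable (\<lambda>m. norm (q z m))"
  unfolding norm_q by (subst summable_real_powr_iff) auto

lemma q_sums_zeta:
  assumes "Re z > 1" shows "q z sums riemann_zeta z"
proof -
  have e: "riemann_zeta z = suminf (\<lambda>n. q z (Suc n))"
    unfolding riemann_zeta_def hurwitz_zeta_def q_def
    by (simp add: add.commute)
  have "summable (\<lambda>n. q z (Suc n))"
    using summable_norm_q[OF assms] by (subst summable_Suc_iff) (rule summable_norm_cancel)
  then have "(\<lambda>n. q z (Suc n)) sums riemann_zeta z" using e summable_sums by metis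
  then show ?thesis by (subst (asm) sums_Suc_iff) simp
qed

lemma hz_nat:
  assumes "Re z > 1"
  shows "((\<lambda>n. q z (n + j)) has_sum hurwitz_zeta z (real j)) UNIV"
proof -
  have c: "complex_of_real (real n + real j) = of_nat (n + j)" for n by simp
  have e: "hurwitz_zeta z (real j) = suminf (\<lambda>n. q z (n + j))"
    unfolding hurwitz_zeta_def q_def c ..
  have ns: "summable (\<lambda>n. norm (q z (n + j)))"
    using summable_norm_q[OF assms] summable_iff_shift[where f="\<lambda>n. norm (q z n)" and k=j] by simp
  then have "summable (\<lambda>n. q z (n + j))" by (rule summable_norm_cancel)
  then have "(\<lambda>n. q z (n + j)) sums hurwitz_zeta z (real j)" unfolding e by (rule summable_sums)
  then show ?thesis by (rule norm_summable_imp_has_sum[OF ns])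
qed

lemma two_powr_inv: "2 powr z * 2 powr (-z) = (1::complex)"
  by (simp only: powr_add[symmetric]) simp

lemma even_sums:
  assumes "Re z > 1"
  shows "(\<lambda>n. q z (2*n)) sums (2 powr (-z) * riemann_zeta z)"
  unfolding q_double by (intro sums_mult q_sums_zeta assms)

lemma odd_sums:
  assumes "Re z > 1"
  shows "(\<lambda>n. q z (2*n+1)) sums (riemann_zeta z - 2 powr (-z) * riemann_zeta z)"
proof -
  have "(\<lambda>n. sum (q z) {n * 2..<n * 2 + 2}) sums riemann_zeta z"
    by (rule sums_group[OF q_sums_zeta[OF assms]]) simp
  moreover have "sum (q z) {n * 2..<n * 2 + 2} = q z (2*n) + q z (2*n+1)" for n
    by (simp add: numeral_2_eq_2 mult.commute)
  ultimately have "(\<lambda>n. q z (2*n) + q z (2*n+1)) sums riemann_zeta z" by simp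
  from sums_diff[OF this even_sums[OF assms]] show ?thesis by simp
qed

lemma hz_half:
  assumes "Re z > 1"
  shows "hurwitz_zeta z (1/2) = 2 powr z * (riemann_zeta z - 2 powr (-z) * riemann_zeta z)"
proof -
  have t: "complex_of_real (real n + 1/2) powr (-z) = 2 powr z * q z (2*n+1)" for n
  proof -
    have "(of_nat (2*n+1) :: complex) = 2 * complex_of_real (real n + 1/2)"
      by (simp add: algebra_simps)
    then have "q z (2*n+1) = 2 powr (-z) * complex_of_real (real n + 1/2) powr (-z)"
      unfolding q_def by (simp only:) (rule powr_times_real, auto)
    then have "2 powr z * q z (2*n+1) = (2 powr z * 2 powr (-z)) * complex_of_real (real n + 1/2) powr (-z)"
      by (simp add: mult.assoc)
    then show ?thesis by (simp add: two_powr_inv)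
  qed
  have "(\<lambda>n. 2 powr z * q z (2*n+1)) sums (2 powr z * (riemann_zeta z - 2 powr (-z) * riemann_zeta z))"
    by (intro sums_mult odd_sums assms)
  then show ?thesis unfolding hurwitz_zeta_def t[symmetric] by (rule sums_unique[symmetric])
qed

lemma pair_sums:
  assumes "Re z > 1"
  shows "(\<lambda>n. q z (2*n) + q z (2*n+1)) sums riemann_zeta z"
proof -
  have "(\<lambda>n. sum (q z) {n * 2..<n * 2 + 2}) sums riemann_zeta z"
    by (rule sums_group[OF q_sums_zeta[OF assms]]) simp
  moreover have "sum (q z) {n * 2..<n * 2 + 2} = q z (2*n) + q z (2*n+1)" for n
    by (simp add: numeral_2_eq_2 mult.commute)
  ultimately show ?thesis by simp
qed

lemma nk: "cmod (1 + complex_of_nat k) = 1 + real k"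
proof -
  have "cmod (1 + complex_of_nat k) = cmod (of_nat (Suc k))" by simp
  also have "\<dots> = 1 + real k" by (simp only: norm_of_nat)
  finally show ?thesis .
qed

definition cn :: "nat \<Rightarrow> nat" where "cn m = (\<Sum>k<m div 2. Suc k)"

lemma gauss2: "2 * (\<Sum>k<j. Suc k) = j * (j + 1)"
  by (induction j) auto

lemma cn_bound: "cn m \<le> m * m"
proof -
  have "cn m \<le> (\<Sum>k<m div 2. m div 2)"
    unfolding cn_def by (rule sum_mono) auto
  also have "\<dots> = (m div 2) * (m div 2)" by simp
  also have "\<dots> \<le> m * m" by (simp add: mult_le_mono)
  finally show ?thesis .
qed

lemma q_minus2: "q (z - 2) m = of_nat m * of_nat m * q z m"
proof -
  have "z - 2 = (z - 1) - 1" by simp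
  then show ?thesis by (simp only: q_minus1) (simp add: mult.assoc)
qed

lemma div2_iff: "k < m div 2 \<longleftrightarrow> 2 * Suc k \<le> (m::nat)"
  by presburger

lemma alg:
  fixes P Q R M Z0 Z1 Z2 :: complex
  assumes "P*Q = 1" "P*R = 2"
  shows "(1/8)*((1+P)*Z1 + Z2 - P*(Q*(Z1 - P*Z1) + (1/2)*(R*(Z0 - M*Z0))))
       = (1/8)*(Z2 + 2*(P*Z1) - (Z0 - M*Z0))"
proof -
  have "P*(Q*(Z1 - P*Z1) + (1/2)*(R*(Z0 - M*Z0))) = (P*Q)*(Z1 - P*Z1) + (P*R)/2*(Z0 - M*Z0)"
    by (simp add: field_simps)
  also have "\<dots> = (Z1 - P*Z1) + (Z0 - M*Z0)" by (simp only: assms) simp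
  finally have e: "P*(Q*(Z1 - P*Z1) + (1/2)*(R*(Z0 - M*Z0))) = (Z1 - P*Z1) + (Z0 - M*Z0)" .
  show ?thesis unfolding e by (simp add: algebra_simps)
qed

theorem mainTheorem10:
  fixes s :: complex
  assumes "Re s > 3"
  shows "(\<lambda>k. of_nat (Suc k) * hurwitz_zeta s (2 * real (Suc k))) sums
    ((1/8) * ((1 + 2 powr (1 - s)) * riemann_zeta (s - 1) + riemann_zeta (s - 2)
      - 2 powr (1 - s) * (hurwitz_zeta (s - 1) (1/2) + (1/2) * hurwitz_zeta s (1/2))))"
proof -
  define G where "G = (\<lambda>(m::nat,k::nat). of_nat (Suc k) * q s m)"
  define B where "B = Sigma UNIV (\<lambda>m::nat. {..<m div 2})"
  have s2: "Re (s-2) > 1" "Re (s-1) > 1" "Re s > 1" using assms by auto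
  have nsum2: "summable (\<lambda>m. norm (q (s-2) m))" by (rule summable_norm_q[OF s2(1)])
  have cbound: "norm (norm (of_nat (cn m) * q s m)) \<le> norm (q (s-2) m)" for m
  proof -
    have "real (cn m) \<le> real m * real m" using cn_bound[of m] by (simp flip: of_nat_mult)
    then have "real (cn m) * norm (q s m) \<le> real m * real m * norm (q s m)"
      by (rule mult_right_mono) simp
    then show ?thesis unfolding q_minus2 by (simp add: norm_mult)
  qed
  have nsumC: "summable (\<lambda>m. norm (of_nat (cn m) * q s m))"
    by (rule summable_comparison_test'[OF nsum2 cbound])
  have absB: "(\<lambda>x. norm (G x)) summable_on B"
    unfolding B_def
  proof (rule summable_on_SigmaI[where g="\<lambda>m. norm (of_nat (cn m) * q s m)"])
    fix m :: nat
    have "(\<Sum>k<m div 2. norm (G (m,k))) = (\<Sum>k<m div 2. real (Suc k)) * norm (q s m)"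
      unfolding G_def by (simp add: norm_mult sum_distrib_right nk)
    also have "\<dots> = norm (of_nat (cn m) * q s m)"
      by (simp only: norm_mult norm_of_nat cn_def) (simp only: of_nat_sum)
    finally have e: "(\<Sum>k<m div 2. norm (G (m,k))) = norm (of_nat (cn m) * q s m)" .
    show "((\<lambda>k. norm (G (m,k))) has_sum norm (of_nat (cn m) * q s m)) {..<m div 2}"
      using has_sum_finite[of "{..<m div 2}" "\<lambda>k. norm (G (m,k))"] unfolding e by simp
  next
    show "(\<lambda>m. norm (of_nat (cn m) * q s m)) summable_on UNIV"
      by (rule summable_nonneg_imp_summable_on[OF nsumC]) simp
  qed simp
  have sumB: "G summable_on B" by (rule abs_summable_summable[OF absB])
  define T where "T = infsum G B"
  have hB: "(G has_sum T) B" unfolding T_def by (rule has_sum_infsum[OF sumB])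
  have hA: "((\<lambda>m. of_nat (cn m) * q s m) has_sum T) UNIV"
  proof (rule has_sum_Sigma'[where f=G and B="\<lambda>m. {..<m div 2}"])
    show "(G has_sum T) (Sigma UNIV (\<lambda>m. {..<m div 2}))" using hB unfolding B_def .
  next
    fix m :: nat
    have e: "(\<Sum>k<m div 2. G (m,k)) = of_nat (cn m) * q s m"
      unfolding G_def cn_def by (simp add: sum_distrib_right)
    show "((\<lambda>k. G (m, k)) has_sum of_nat (cn m) * q s m) {..<m div 2}"
      using has_sum_finite[of "{..<m div 2}" "\<lambda>k. G (m,k)"] unfolding e by simp
  qed
  have hC: "((\<lambda>(k,n). of_nat (Suc k) * q s (n + 2 * Suc k)) has_sum T) (UNIV \<times> UNIV)"
  proof -
    have "((\<lambda>(k,n). of_nat (Suc k) * q s (n + 2 * Suc k)) has_sum T) (UNIV \<times> UNIV) = (G has_sum T) B"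
      by (rule has_sum_reindex_bij_witness[where j="\<lambda>(k,n). (n + 2*Suc k, k)" and i="\<lambda>(m,k). (k, m - 2*Suc k)"])
        (auto simp: B_def G_def div2_iff)
    with hB show ?thesis by simp
  qed
  have hK: "((\<lambda>k. of_nat (Suc k) * hurwitz_zeta s (2 * real (Suc k))) has_sum T) UNIV"
  proof (rule has_sum_Sigma'[where f="\<lambda>(k,n). of_nat (Suc k) * q s (n + 2 * Suc k)" and B="\<lambda>_. UNIV"])
    show "((\<lambda>(k,n). of_nat (Suc k) * q s (n + 2 * Suc k)) has_sum T) (Sigma UNIV (\<lambda>_. UNIV))"
      using hC .
  next
    fix k :: nat
    have e: "2 * real (Suc k) = real (2 * Suc k)" by simp
    show "((\<lambda>n. (\<lambda>(k,n). of_nat (Suc k) * q s (n + 2 * Suc k)) (k, n)) has_sum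
           of_nat (Suc k) * hurwitz_zeta s (2 * real (Suc k))) UNIV"
      unfolding e using has_sum_cmult_right[OF hz_nat[OF s2(3), of "2 * Suc k"], of "of_nat (Suc k)"]
      by simp
  qed
  have sumsK: "(\<lambda>k. of_nat (Suc k) * hurwitz_zeta s (2 * real (Suc k))) sums T"
    by (rule has_sum_imp_sums[OF hK])
  have sA: "(\<lambda>m. of_nat (cn m) * q s m) sums T" by (rule has_sum_imp_sums[OF hA])
  have sG: "(\<lambda>n. sum (\<lambda>m. of_nat (cn m) * q s m) {n*2..<n*2+2}) sums T"
    by (rule sums_group[OF sA]) simp
  have trm: "sum (\<lambda>m. of_nat (cn m) * q s m) {n*2..<n*2+2}
     = (1/8) * ((q (s-2) (2*n) + q (s-2) (2*n+1)) + 2 * q (s-1) (2*n) - q s (2*n+1))" for n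
  proof -
    have c1: "cn (2*n+1) = cn (2*n)" by (simp add: cn_def)
    have c2: "2 * cn (2*n) = n * (n+1)" using gauss2[of n] by (simp add: cn_def)
    then have "(2 * of_nat (cn (2*n)) :: complex) = of_nat n * (of_nat n + 1)"
      by (metis of_nat_1 of_nat_add of_nat_mult of_nat_numeral)
    then have c3: "(of_nat (cn (2*n)) :: complex) = of_nat n * (of_nat n + 1) / 2"
      by (simp add: field_simps)
    have "sum (\<lambda>m. of_nat (cn m) * q s m) {n*2..<n*2+2} = of_nat (cn (2*n)) * q s (2*n) + of_nat (cn (2*n+1)) * q s (2*n+1)"
      by (simp add: numeral_2_eq_2 mult.commute)
    also have "\<dots> = of_nat n * (of_nat n + 1) / 2 * (q s (2*n) + q s (2*n+1))"
      unfolding c1 c3 by (simp add: algebra_simps)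
    also have "\<dots> = (1/8) * ((q (s-2) (2*n) + q (s-2) (2*n+1)) + 2 * q (s-1) (2*n) - q s (2*n+1))"
      unfolding q_minus2 q_minus1 by (simp add: field_simps)
    finally show ?thesis .
  qed
  define Z0 where "Z0 = riemann_zeta s"
  define Z1 where "Z1 = riemann_zeta (s-1)"
  define Z2 where "Z2 = riemann_zeta (s-2)"
  have sR: "(\<lambda>n. (1/8) * ((q (s-2) (2*n) + q (s-2) (2*n+1)) + 2 * q (s-1) (2*n) - q s (2*n+1)))
     sums ((1/8) * (Z2 + 2 * (2 powr (-(s-1)) * Z1) - (Z0 - 2 powr (-s) * Z0)))"
    unfolding Z0_def Z1_def Z2_def
    by (intro sums_mult sums_diff sums_add pair_sums even_sums odd_sums s2)
  have sG': "(\<lambda>n. (1/8) * ((q (s-2) (2*n) + q (s-2) (2*n+1)) + 2 * q (s-1) (2*n) - q s (2*n+1))) sums T"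
    using sG unfolding trm .
  have Tv: "T = (1/8) * (Z2 + 2 * (2 powr (1-s) * Z1) - (Z0 - 2 powr (-s) * Z0))"
    using sums_unique2[OF sG' sR] by simp
  have h1: "hurwitz_zeta (s-1) (1/2) = 2 powr (s-1) * (Z1 - 2 powr (1-s) * Z1)"
    using hz_half[OF s2(2)] unfolding Z1_def by simp
  have h0: "hurwitz_zeta s (1/2) = 2 powr s * (Z0 - 2 powr (-s) * Z0)"
    using hz_half[OF s2(3)] unfolding Z0_def .
  have p1: "2 powr (1-s) * 2 powr (s-1) = (1::complex)"
    by (simp only: powr_add[symmetric]) simp
  have p2: "2 powr (1-s) * 2 powr s = (2::complex)"
    by (simp only: powr_add[symmetric]) simp
  have "T = ((1/8) * ((1 + 2 powr (1 - s)) * riemann_zeta (s - 1) + riemann_zeta (s - 2)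
      - 2 powr (1 - s) * (hurwitz_zeta (s - 1) (1/2) + (1/2) * hurwitz_zeta s (1/2))))"
    unfolding h1 h0 Tv Z1_def[symmetric] Z2_def[symmetric]
    by (rule alg[OF p1 p2, symmetric])
  with sumsK show ?thesis by simp
qed

end
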